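(* Let $A, C, D$ be binary random variables, with $A$ taking values $a,\overline{a}$, $C$ taking values $c,\overline{c}$, $D$ taking values $d,\overline{d}$, and let $Y$ be a real random variable with finite expectation. Suppose the joint distribution factorizes as \[ p(A,C,D,Y)=p(D)\,p(C\mid D)\,p(A\mid C)\,p(Y\mid A,C). \] Assume that $C$ and $D$ are dependent, and that every event $\{A=x, C=y, D=z\}$ has positive probability. If $E[Y\mid A,D]$ and $E[A\mid D]$ are both nondecreasing or both nonincreasing in $D$, then $RD_{obs}\ge RD_{true}$. If $E[Y\mid A,D]$ and $E[A\mid D]$ are one nondecreasing and the other nonincreasing in $D$, then $RD_{obs}\le RD_{true}$.
   Context: $RD_{true}=E[Y|a,c]p(c)+E[Y|a,\overline{c}]p(\overline{c})-E[Y|\overline{a},c]p(c)-E[Y|\overline{a},\overline{c}]p(\overline{c})$; $RD_{obs}=E[Y|a,d]p(d)+E[Y|a,\overline{d}]p(\overline{d})-E[Y|\overline{a},d]p(d)-E[Y|\overline{a},\overline{d}]p(\overline{d})$. $E[Y\mid A,D]$ is nondecreasing in $D$ if $E[Y\mid a,d]\ge E[Y\mid a,\overline{d}]$ and $E[Y\mid \overline{a},d]\ge E[Y\mid \overline{a},\overline{d}]$, nonincreasing if both are reversed. With $a=1,\overline{a}=0$, $E[A\mid D]=p(a\mid D)$ is nondecreasing in $D$ if $p(a\mid d)\ge p(a\mid\overline{d})$ and nonincreasing if $p(a\mid d)\le p(a\mid\overline{d})$. *)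

theory Defs
  imports "HOL-Probability.Probability"
begin

text \<open>Binary variables are modelled as bool-valued random variables; the value
  True stands for a, c, d (and a = 1), False for the barred values.\<close>

definition ev :: "'s measure \<Rightarrow> ('s \<Rightarrow> bool) \<Rightarrow> 's set" where
  "ev M P = {\<omega> \<in> space M. P \<omega>}"

definition cprob :: "'s measure \<Rightarrow> ('s \<Rightarrow> bool) \<Rightarrow> ('s \<Rightarrow> bool) \<Rightarrow> real" where
  "cprob M P Q = measure M (ev M (\<lambda>\<omega>. P \<omega> \<and> Q \<omega>)) / measure M (ev M Q)"

definition cexp :: "'s measure \<Rightarrow> ('s \<Rightarrow> real) \<Rightarrow> ('s \<Rightarrow> bool) \<Rightarrow> real" where
  "cexp M Y Q = (\<integral>\<omega>. indicator (ev M Q) \<omega> * Y \<omega> \<partial>M) / measure M (ev M Q)"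

definition RD :: "'s measure \<Rightarrow> ('s \<Rightarrow> bool) \<Rightarrow> ('s \<Rightarrow> bool) \<Rightarrow> ('s \<Rightarrow> real) \<Rightarrow> real" where
  "RD M A Z Y =
     cexp M Y (\<lambda>\<omega>. A \<omega> \<and> Z \<omega>) * measure M (ev M Z)
   + cexp M Y (\<lambda>\<omega>. A \<omega> \<and> \<not> Z \<omega>) * measure M (ev M (\<lambda>\<omega>. \<not> Z \<omega>))
   - cexp M Y (\<lambda>\<omega>. \<not> A \<omega> \<and> Z \<omega>) * measure M (ev M Z)
   - cexp M Y (\<lambda>\<omega>. \<not> A \<omega> \<and> \<not> Z \<omega>) * measure M (ev M (\<lambda>\<omega>. \<not> Z \<omega>))"

definition EY_nondec :: "'s measure \<Rightarrow> ('s \<Rightarrow> bool) \<Rightarrow> ('s \<Rightarrow> bool) \<Rightarrow> ('s \<Rightarrow> real) \<Rightarrow> bool" where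
  "EY_nondec M A D Y \<longleftrightarrow> (\<forall>x. cexp M Y (\<lambda>\<omega>. A \<omega> = x \<and> D \<omega>) \<ge> cexp M Y (\<lambda>\<omega>. A \<omega> = x \<and> \<not> D \<omega>))"

definition EY_noninc :: "'s measure \<Rightarrow> ('s \<Rightarrow> bool) \<Rightarrow> ('s \<Rightarrow> bool) \<Rightarrow> ('s \<Rightarrow> real) \<Rightarrow> bool" where
  "EY_noninc M A D Y \<longleftrightarrow> (\<forall>x. cexp M Y (\<lambda>\<omega>. A \<omega> = x \<and> D \<omega>) \<le> cexp M Y (\<lambda>\<omega>. A \<omega> = x \<and> \<not> D \<omega>))"

definition EA_nondec :: "'s measure \<Rightarrow> ('s \<Rightarrow> bool) \<Rightarrow> ('s \<Rightarrow> bool) \<Rightarrow> bool" where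
  "EA_nondec M A D \<longleftrightarrow> cprob M A D \<ge> cprob M A (\<lambda>\<omega>. \<not> D \<omega>)"

definition EA_noninc :: "'s measure \<Rightarrow> ('s \<Rightarrow> bool) \<Rightarrow> ('s \<Rightarrow> bool) \<Rightarrow> bool" where
  "EA_noninc M A D \<longleftrightarrow> cprob M A D \<le> cprob M A (\<lambda>\<omega>. \<not> D \<omega>)"

end

theory Submission
  imports Defs
begin

lemma poly_id: "(q*r1*m11 + (1-q)*r0*m10) * (q*(1-r1) + (1-q)*(1-r0)) - (q*(1-r1)*m01 + (1-q)*(1-r0)*m00)*(q*r1 + (1-q)*r0)
  - (m11*q + m10*(1-q) - m01*q - m00*(1-q)) * (q*r1 + (1-q)*r0) * (q*(1-r1) + (1-q)*(1-r0))
  = (r1 - r0) * (q*(1-q)) * ((m11-m10)*(q*(1-r1) + (1-q)*(1-r0)) + (m01-m00)*(q*r1 + (1-q)*r0))"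
  for q r1 r0 m11 m10 m01 m00 :: real
  by algebra
lemma zterm:
  fixes q r1 r0 m11 m10 m01 m00 :: real
  assumes "q*r1 + (1-q)*r0 > 0" "q*(1-r1) + (1-q)*(1-r0) > 0"
  shows "(q*r1*m11 + (1-q)*r0*m10) / (q*r1 + (1-q)*r0) - (q*(1-r1)*m01 + (1-q)*(1-r0)*m00) / (q*(1-r1) + (1-q)*(1-r0))
     - (m11*q + m10*(1-q) - m01*q - m00*(1-q))
   = (r1 - r0) * (q*(1-q)/((q*r1 + (1-q)*r0)*(q*(1-r1) + (1-q)*(1-r0)))) * ((m11-m10)*(q*(1-r1) + (1-q)*(1-r0)) + (m01-m00)*(q*r1 + (1-q)*r0))"
proof -
  define D1 where "D1 = q*r1 + (1-q)*r0"
  define D0 where "D0 = q*(1-r1) + (1-q)*(1-r0)"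
  define N1 where "N1 = q*r1*m11 + (1-q)*r0*m10"
  define N0 where "N0 = q*(1-r1)*m01 + (1-q)*(1-r0)*m00"
  define L where "L = m11*q + m10*(1-q) - m01*q - m00*(1-q)"
  define K where "K = (m11-m10)*D0 + (m01-m00)*D1"
  have p: "D1 > 0" "D0 > 0" using assms by (simp_all add: D1_def D0_def)
  have pi: "N1*D0 - N0*D1 - L*D1*D0 = (r1-r0)*(q*(1-q))*K"
    unfolding N1_def N0_def L_def D1_def D0_def K_def by (rule poly_id)
  have "N1/D1 - N0/D0 - L = (N1*D0 - N0*D1 - L*D1*D0)/(D1*D0)"
    using p by (simp add: field_simps)
  also have "\<dots> = (r1-r0)*(q*(1-q)/(D1*D0))*K" using pi by simp
  finally show ?thesis unfolding N1_def N0_def L_def D1_def D0_def K_def .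
qed
lemma alg_core:
  fixes w1 w0 q1 q0 r1 r0 m11 m10 m01 m00 :: real
  assumes w: "w1 > 0" "w0 > 0" and q: "0 < q1" "q1 < 1" "0 < q0" "q0 < 1"
    and r: "0 < r1" "r1 < 1" "0 < r0" "r0 < 1" and dep: "q1 \<noteq> q0"
  assumes E11_def: "E11 = (q1*r1*m11 + (1-q1)*r0*m10) / (q1*r1 + (1-q1)*r0)"
    and E10_def: "E10 = (q0*r1*m11 + (1-q0)*r0*m10) / (q0*r1 + (1-q0)*r0)"
    and E01_def: "E01 = (q1*(1-r1)*m01 + (1-q1)*(1-r0)*m00) / (q1*(1-r1) + (1-q1)*(1-r0))"
    and E00_def: "E00 = (q0*(1-r1)*m01 + (1-q0)*(1-r0)*m00) / (q0*(1-r1) + (1-q0)*(1-r0))"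
    and pa1_def: "pa1 = q1*r1 + (1-q1)*r0" and pa0_def: "pa0 = q0*r1 + (1-q0)*r0"
    and RDD_def: "RDD = E11*w1 + E10*w0 - E01*w1 - E00*w0"
    and RDC_def: "RDC = m11*(w1*q1+w0*q0) + m10*(w1*(1-q1)+w0*(1-q0))
              - m01*(w1*q1+w0*q0) - m00*(w1*(1-q1)+w0*(1-q0))"
  shows "((E11 \<ge> E10 \<and> E01 \<ge> E00 \<and> pa1 \<ge> pa0) \<or> (E11 \<le> E10 \<and> E01 \<le> E00 \<and> pa1 \<le> pa0)
            \<longrightarrow> RDD \<ge> RDC)
       \<and> ((E11 \<ge> E10 \<and> E01 \<ge> E00 \<and> pa1 \<le> pa0) \<or> (E11 \<le> E10 \<and> E01 \<le> E00 \<and> pa1 \<ge> pa0)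
            \<longrightarrow> RDD \<le> RDC)"
proof -
  define D11 where "D11 = q1*r1 + (1-q1)*r0"
  define D10 where "D10 = q0*r1 + (1-q0)*r0"
  define D01 where "D01 = q1*(1-r1) + (1-q1)*(1-r0)"
  define D00 where "D00 = q0*(1-r1) + (1-q0)*(1-r0)"
  have pos: "D11 > 0" "D10 > 0" "D01 > 0" "D00 > 0"
    unfolding D11_def D10_def D01_def D00_def using q r
    by (simp_all add: add_pos_pos)
  have e1: "E11 - E10 = (m11 - m10) * (r1*r0/(D11*D10)) * (q1 - q0)"
    using pos unfolding E11_def E10_def D11_def D10_def
    by (simp add: field_simps; algebra)
  have e0: "E01 - E00 = (m01 - m00) * ((1-r1)*(1-r0)/(D01*D00)) * (q1 - q0)"
    using pos unfolding E01_def E00_def D01_def D00_def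
    by (simp add: field_simps; algebra)
  have ea: "pa1 - pa0 = (r1 - r0) * (q1 - q0)"
    unfolding pa1_def pa0_def by (simp add: algebra_simps)
  have z1: "E11 - E01 - (m11*q1 + m10*(1-q1) - m01*q1 - m00*(1-q1))
      = (r1 - r0) * (q1*(1-q1)/(D11*D01)) * ((m11-m10)*D01 + (m01-m00)*D11)"
    using zterm[of q1 r1 r0 m11 m10 m01 m00] pos unfolding E11_def E01_def D11_def D01_def by simp
  have z0: "E10 - E00 - (m11*q0 + m10*(1-q0) - m01*q0 - m00*(1-q0))
      = (r1 - r0) * (q0*(1-q0)/(D10*D00)) * ((m11-m10)*D00 + (m01-m00)*D10)"
    using zterm[of q0 r1 r0 m11 m10 m01 m00] pos unfolding E10_def E00_def D10_def D00_def by simp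
  have diff: "RDD - RDC = w1 * (E11 - E01 - (m11*q1 + m10*(1-q1) - m01*q1 - m00*(1-q1)))
     + w0 * (E10 - E00 - (m11*q0 + m10*(1-q0) - m01*q0 - m00*(1-q0)))"
    unfolding RDD_def RDC_def by (simp add: algebra_simps)
  define a where "a = r1 - r0"
  define b1 where "b1 = m11 - m10"
  define b0 where "b0 = m01 - m00"
  define dq where "dq = q1 - q0"
  define g1 where "g1 = q1*(1-q1)/(D11*D01)"
  define g0 where "g0 = q0*(1-q0)/(D10*D00)"
  define k1 where "k1 = r1*r0/(D11*D10)"
  define k0 where "k0 = (1-r1)*(1-r0)/(D01*D00)"
  have gk: "g1 > 0" "g0 > 0" "k1 > 0" "k0 > 0"
    using pos q r by (simp_all add: g1_def g0_def k1_def k0_def)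
  have s0: "dq \<noteq> 0" using dep by (simp add: dq_def)
  have D: "RDD - RDC = w1*g1*(a*b1*D01 + a*b0*D11) + w0*g0*(a*b1*D00 + a*b0*D10)"
    unfolding diff z1 z0 a_def[symmetric] b1_def[symmetric] b0_def[symmetric] g1_def[symmetric] g0_def[symmetric] by (simp add: algebra_simps)
  have E1: "E11 - E10 = k1 * (b1 * dq)" using e1 by (simp add: k1_def b1_def dq_def)
  have E0: "E01 - E00 = k0 * (b0 * dq)" using e0 by (simp add: k0_def b0_def dq_def)
  have EA: "pa1 - pa0 = a * dq" using ea by (simp add: a_def dq_def)
  have sg1: "x*y \<ge> 0" if "x*dq \<ge> 0" "y*dq \<ge> 0" for x y
    using that s0 by (cases "dq > 0") (auto simp: zero_le_mult_iff)
  have sg2: "x*y \<ge> 0" if "x*dq \<le> 0" "y*dq \<le> 0" for x y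
    using that s0 by (cases "dq > 0") (auto simp: mult_le_0_iff zero_le_mult_iff)
  have sg3: "x*y \<le> 0" if "x*dq \<ge> 0" "y*dq \<le> 0" for x y
    using that s0 by (cases "dq > 0") (auto simp: mult_le_0_iff zero_le_mult_iff)
  have pk: "x*dq \<ge> 0 \<longleftrightarrow> k*(x*dq) \<ge> 0" "x*dq \<le> 0 \<longleftrightarrow> k*(x*dq) \<le> 0" if "k > 0" for k x
    using that by (auto simp: zero_le_mult_iff mult_le_0_iff)
  have fin: "0 \<le> w1*g1*(a*b1*D01 + a*b0*D11) + w0*g0*(a*b1*D00 + a*b0*D10)"
    if "a*b1 \<ge> 0" "a*b0 \<ge> 0"
  proof -
    have h: "0 \<le> a*b1*D01" "0 \<le> a*b0*D11" "0 \<le> a*b1*D00" "0 \<le> a*b0*D10"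
      using mult_nonneg_nonneg[OF that(1)] mult_nonneg_nonneg[OF that(2)] pos by auto
    have "0 \<le> w1*g1" "0 \<le> w0*g0" using w gk by auto
    then show ?thesis using h by (metis add_nonneg_nonneg mult_nonneg_nonneg)
  qed
  have fin2: "w1*g1*(a*b1*D01 + a*b0*D11) + w0*g0*(a*b1*D00 + a*b0*D10) \<le> 0"
    if "a*b1 \<le> 0" "a*b0 \<le> 0"
  proof -
    have h: "a*b1*D01 \<le> 0" "a*b0*D11 \<le> 0" "a*b1*D00 \<le> 0" "a*b0*D10 \<le> 0"
      using mult_nonpos_nonneg[OF that(1)] mult_nonpos_nonneg[OF that(2)] pos by auto
    have "0 \<le> w1*g1" "0 \<le> w0*g0" using w gk by auto
    then show ?thesis using h by (metis add_nonpos_nonpos mult_nonneg_nonpos)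
  qed
  show ?thesis
  proof (intro conjI impI)
    assume h: "E10 \<le> E11 \<and> E00 \<le> E01 \<and> pa0 \<le> pa1 \<or> E11 \<le> E10 \<and> E01 \<le> E00 \<and> pa1 \<le> pa0"
    have "a*b1 \<ge> 0 \<and> a*b0 \<ge> 0"
    proof (cases "E10 \<le> E11 \<and> E00 \<le> E01 \<and> pa0 \<le> pa1")
      case True
      then have "b1*dq \<ge> 0" "b0*dq \<ge> 0" "a*dq \<ge> 0" using E1 E0 EA pk gk by (smt (verit))+
      then show ?thesis using sg1 by blast
    next
      case False
      then have "b1*dq \<le> 0" "b0*dq \<le> 0" "a*dq \<le> 0" using h E1 E0 EA pk gk by (smt (verit))+
      then show ?thesis using sg2 by blast
    qed
    then show "RDC \<le> RDD" using fin D by linarith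
  next
    assume h: "E10 \<le> E11 \<and> E00 \<le> E01 \<and> pa1 \<le> pa0 \<or> E11 \<le> E10 \<and> E01 \<le> E00 \<and> pa0 \<le> pa1"
    have "a*b1 \<le> 0 \<and> a*b0 \<le> 0"
    proof (cases "E10 \<le> E11 \<and> E00 \<le> E01 \<and> pa1 \<le> pa0")
      case True
      then have "b1*dq \<ge> 0" "b0*dq \<ge> 0" "a*dq \<le> 0" using E1 E0 EA pk gk by (smt (verit))+
      then show ?thesis using sg3 by (metis mult.commute)
    next
      case False
      then have "b1*dq \<le> 0" "b0*dq \<le> 0" "a*dq \<ge> 0" using h E1 E0 EA pk gk by (smt (verit))+
      then show ?thesis using sg3 by (metis mult.commute)
    qed
    then show "RDD \<le> RDC" using fin2 D by linarith
  qed
qed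

lemma emeasure_ind_distr:
  assumes [measurable]: "Y \<in> borel_measurable M" "S \<in> sets M" "B \<in> sets borel"
  shows "emeasure (distr (density M (\<lambda>x. ennreal (indicator S x))) borel Y) B
       = emeasure M (S \<inter> (Y -` B \<inter> space M))"
proof -
  have "emeasure (distr (density M (\<lambda>x. ennreal (indicator S x))) borel Y) B
      = emeasure (density M (\<lambda>x. ennreal (indicator S x))) (Y -` B \<inter> space M)"
    by (subst emeasure_distr) auto
  also have "\<dots> = (\<integral>\<^sup>+ x. ennreal (indicator S x) * indicator (Y -` B \<inter> space M) x \<partial>M)"
    by (subst emeasure_density) auto
  also have "\<dots> = (\<integral>\<^sup>+ x. indicator (S \<inter> (Y -` B \<inter> space M)) x \<partial>M)"
    by (intro nn_integral_cong) (auto split: split_indicator)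
  also have "\<dots> = emeasure M (S \<inter> (Y -` B \<inter> space M))"
    by (subst nn_integral_indicator) auto
  finally show ?thesis .
qed

lemma integral_ind_distr:
  fixes Y :: "'a \<Rightarrow> real"
  assumes [measurable]: "Y \<in> borel_measurable M" "S \<in> sets M"
  shows "(\<integral>t. t \<partial>distr (density M (\<lambda>x. ennreal (indicator S x))) borel Y)
       = (\<integral>\<omega>. indicator S \<omega> * Y \<omega> \<partial>M)"
proof -
  have "(\<integral>t. t \<partial>distr (density M (\<lambda>x. ennreal (indicator S x))) borel Y)
      = (\<integral>\<omega>. Y \<omega> \<partial>density M (\<lambda>x. ennreal (indicator S x)))"
    by (subst integral_distr) auto
  also have "\<dots> = (\<integral>\<omega>. indicator S \<omega> *\<^sub>R Y \<omega> \<partial>M)"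
    by (subst integral_density) auto
  finally show ?thesis by simp
qed

lemma dist_scale:
  fixes Y :: "'a \<Rightarrow> real"
  assumes fin: "finite_measure M" and [measurable]: "Y \<in> borel_measurable M"
    and [measurable]: "S \<in> sets M" "T \<in> sets M" and k: "k \<ge> 0"
    and eq: "\<forall>B \<in> sets borel. measure M (S \<inter> (Y -` B \<inter> space M)) = k * measure M (T \<inter> (Y -` B \<inter> space M))"
  shows "(\<integral>\<omega>. indicator S \<omega> * Y \<omega> \<partial>M) = k * (\<integral>\<omega>. indicator T \<omega> * Y \<omega> \<partial>M)"
proof -
  interpret finite_measure M by (rule fin)
  define NS where "NS = distr (density M (\<lambda>x. ennreal (indicator S x))) borel Y"
  define NT where "NT = distr (density M (\<lambda>x. ennreal (indicator T x))) borel Y"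
  have "NS = density NT (\<lambda>_. ennreal k)"
  proof (rule measure_eqI)
    show "sets NS = sets (density NT (\<lambda>_. ennreal k))" by (simp add: NS_def NT_def)
  next
    fix B assume "B \<in> sets NS"
    then have B[measurable]: "B \<in> sets borel" by (simp add: NS_def)
    have "emeasure NS B = ennreal (measure M (S \<inter> (Y -` B \<inter> space M)))"
      unfolding NS_def by (simp add: emeasure_ind_distr emeasure_eq_measure)
    also have "\<dots> = ennreal k * ennreal (measure M (T \<inter> (Y -` B \<inter> space M)))"
      using eq B k by (simp add: ennreal_mult)
    also have "\<dots> = ennreal k * emeasure NT B"
      unfolding NT_def by (simp add: emeasure_ind_distr emeasure_eq_measure)
    also have "\<dots> = emeasure (density NT (\<lambda>_. ennreal k)) B"
      by (subst emeasure_density_const) (auto simp: NT_def)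
    finally show "emeasure NS B = emeasure (density NT (\<lambda>_. ennreal k)) B" .
  qed
  then have "(\<integral>t. t \<partial>NS) = (\<integral>t. t \<partial>density NT (\<lambda>_. ennreal k))" by simp
  also have "\<dots> = (\<integral>t. k *\<^sub>R t \<partial>NT)"
    using k by (subst integral_density) (auto simp: NT_def)
  also have "\<dots> = k * (\<integral>t. t \<partial>NT)" by simp
  finally show ?thesis unfolding NS_def NT_def by (simp add: integral_ind_distr)
qed
lemma ev_sets[measurable]:
  assumes "Measurable.pred M P" shows "ev M P \<in> sets M"
  using assms unfolding ev_def by measurable

lemma decomp3:
  fixes f :: "'s \<Rightarrow> real" and A C D :: "'s \<Rightarrow> bool"
  assumes [measurable]: "A \<in> M \<rightarrow>\<^sub>M count_space UNIV" "C \<in> M \<rightarrow>\<^sub>M count_space UNIV"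
    "D \<in> M \<rightarrow>\<^sub>M count_space UNIV" and f: "integrable M f"
  shows "(\<integral>\<omega>. indicator (ev M (\<lambda>\<omega>. R (A \<omega>) (C \<omega>) (D \<omega>))) \<omega> * f \<omega> \<partial>M)
    = (\<Sum>x\<in>UNIV. \<Sum>y\<in>UNIV. \<Sum>z\<in>UNIV. (if R x y z then 1 else 0) *
         (\<integral>\<omega>. indicator (ev M (\<lambda>\<omega>. A \<omega> = x \<and> C \<omega> = y \<and> D \<omega> = z)) \<omega> * f \<omega> \<partial>M))"
proof -
  have int: "integrable M (\<lambda>\<omega>. indicator (ev M (\<lambda>\<omega>. A \<omega> = x \<and> C \<omega> = y \<and> D \<omega> = z)) \<omega> * f \<omega>)" for x y z
    using integrable_real_mult_indicator[OF _ f, of "ev M (\<lambda>\<omega>. A \<omega> = x \<and> C \<omega> = y \<and> D \<omega> = z)"]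
    by (simp add: mult.commute)
  have pw: "indicator (ev M (\<lambda>\<omega>. R (A \<omega>) (C \<omega>) (D \<omega>))) \<omega> * f \<omega>
    = (\<Sum>x\<in>UNIV. \<Sum>y\<in>UNIV. \<Sum>z\<in>UNIV. (if R x y z then 1 else 0) *
         (indicator (ev M (\<lambda>\<omega>. A \<omega> = x \<and> C \<omega> = y \<and> D \<omega> = z)) \<omega> * f \<omega>))" for \<omega>
    unfolding UNIV_bool by (cases "A \<omega>"; cases "C \<omega>"; cases "D \<omega>"; simp add: ev_def indicator_def)
  show ?thesis
    unfolding pw using int by (simp add: integral_sum integrable_sum)
qed
lemma cancel_w:
  fixes w a b c d :: real
  assumes "w > 0"
  shows "(w*a*b*c + w*d*e*f)/(w*a*b + w*d*e) = (a*b*c + d*e*f)/(a*b + d*e)"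
    and "(w*a*b + w*d*e)/w = a*b + d*e"
proof -
  have "(w*a*b*c + w*d*e*f) = w*(a*b*c + d*e*f)" "w*a*b + w*d*e = w*(a*b + d*e)"
    by (simp_all add: algebra_simps)
  then show "(w*a*b*c + w*d*e*f)/(w*a*b + w*d*e) = (a*b*c + d*e*f)/(a*b + d*e)"
    using assms by simp
  show "(w*a*b + w*d*e)/w = a*b + d*e" using assms by (simp add: field_simps)
qed

lemma alg_w:
  fixes w1 w0 q1 q0 r1 r0 m11 m10 m01 m00 :: real
  assumes w: "w1 > 0" "w0 > 0" and q: "0 < q1" "q1 < 1" "0 < q0" "q0 < 1"
    and r: "0 < r1" "r1 < 1" "0 < r0" "r0 < 1" and dep: "q1 \<noteq> q0"
  assumes E11_def: "E11 = (w1*q1*r1*m11 + w1*(1-q1)*r0*m10) / (w1*q1*r1 + w1*(1-q1)*r0)"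
    and E10_def: "E10 = (w0*q0*r1*m11 + w0*(1-q0)*r0*m10) / (w0*q0*r1 + w0*(1-q0)*r0)"
    and E01_def: "E01 = (w1*q1*(1-r1)*m01 + w1*(1-q1)*(1-r0)*m00) / (w1*q1*(1-r1) + w1*(1-q1)*(1-r0))"
    and E00_def: "E00 = (w0*q0*(1-r1)*m01 + w0*(1-q0)*(1-r0)*m00) / (w0*q0*(1-r1) + w0*(1-q0)*(1-r0))"
    and pa1_def: "pa1 = (w1*q1*r1 + w1*(1-q1)*r0)/w1" and pa0_def: "pa0 = (w0*q0*r1 + w0*(1-q0)*r0)/w0"
    and RDD_def: "RDD = E11*w1 + E10*w0 - E01*w1 - E00*w0"
    and RDC_def: "RDC = m11*(w1*q1+w0*q0) + m10*(w1*(1-q1)+w0*(1-q0))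
              - m01*(w1*q1+w0*q0) - m00*(w1*(1-q1)+w0*(1-q0))"
  shows "((E11 \<ge> E10 \<and> E01 \<ge> E00 \<and> pa1 \<ge> pa0) \<or> (E11 \<le> E10 \<and> E01 \<le> E00 \<and> pa1 \<le> pa0)
            \<longrightarrow> RDD \<ge> RDC)
       \<and> ((E11 \<ge> E10 \<and> E01 \<ge> E00 \<and> pa1 \<le> pa0) \<or> (E11 \<le> E10 \<and> E01 \<le> E00 \<and> pa1 \<ge> pa0)
            \<longrightarrow> RDD \<le> RDC)"
  by (rule alg_core[OF w q r dep _ _ _ _ _ _ RDD_def RDC_def])
     (simp_all only: E11_def E10_def E01_def E00_def pa1_def pa0_def cancel_w w)

lemma meas_split:
  assumes "prob_space M" "Measurable.pred M P" "Measurable.pred M Q"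
  shows "measure M (ev M P) = measure M (ev M (\<lambda>\<omega>. Q \<omega> \<and> P \<omega>)) + measure M (ev M (\<lambda>\<omega>. \<not> Q \<omega> \<and> P \<omega>))"
proof -
  interpret prob_space M by fact
  have "ev M P = ev M (\<lambda>\<omega>. Q \<omega> \<and> P \<omega>) \<union> ev M (\<lambda>\<omega>. \<not> Q \<omega> \<and> P \<omega>)"
    by (auto simp: ev_def)
  moreover have "ev M (\<lambda>\<omega>. Q \<omega> \<and> P \<omega>) \<inter> ev M (\<lambda>\<omega>. \<not> Q \<omega> \<and> P \<omega>) = {}"
    by (auto simp: ev_def)
  ultimately show ?thesis using assms(2,3)
    by (simp add: finite_measure_Union)
qed

theorem corollary3:
  fixes M :: "'s measure" and A C D :: "'s \<Rightarrow> bool" and Y :: "'s \<Rightarrow> real"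
  assumes "prob_space M"
    and "A \<in> M \<rightarrow>\<^sub>M count_space UNIV"
    and "C \<in> M \<rightarrow>\<^sub>M count_space UNIV"
    and "D \<in> M \<rightarrow>\<^sub>M count_space UNIV"
    and "Y \<in> borel_measurable M" and "integrable M Y"
    and factor: "\<forall>x y z B. B \<in> sets borel \<longrightarrow>
        measure M (ev M (\<lambda>\<omega>. A \<omega> = x \<and> C \<omega> = y \<and> D \<omega> = z \<and> Y \<omega> \<in> B))
        = measure M (ev M (\<lambda>\<omega>. D \<omega> = z))
          * cprob M (\<lambda>\<omega>. C \<omega> = y) (\<lambda>\<omega>. D \<omega> = z)
          * cprob M (\<lambda>\<omega>. A \<omega> = x) (\<lambda>\<omega>. C \<omega> = y)
          * cprob M (\<lambda>\<omega>. Y \<omega> \<in> B) (\<lambda>\<omega>. A \<omega> = x \<and> C \<omega> = y)"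
    and dep: "\<not> prob_space.indep_var M (count_space UNIV) C (count_space UNIV) D"
    and pos: "\<forall>x y z. measure M (ev M (\<lambda>\<omega>. A \<omega> = x \<and> C \<omega> = y \<and> D \<omega> = z)) > 0"
  shows "((EY_nondec M A D Y \<and> EA_nondec M A D) \<or> (EY_noninc M A D Y \<and> EA_noninc M A D)
            \<longrightarrow> RD M A D Y \<ge> RD M A C Y)
       \<and> ((EY_nondec M A D Y \<and> EA_noninc M A D) \<or> (EY_noninc M A D Y \<and> EA_nondec M A D)
            \<longrightarrow> RD M A D Y \<le> RD M A C Y)"
proof -
  interpret prob_space M by fact
  note [measurable] = assms(2-5)
  note Yint = assms(6)
  define S where "S x y z = ev M (\<lambda>\<omega>. A \<omega> = x \<and> C \<omega> = y \<and> D \<omega> = z)" for x y z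
  define P where "P x y z = measure M (S x y z)" for x y z
  define I where "I x y z = (\<integral>\<omega>. indicator (S x y z) \<omega> * Y \<omega> \<partial>M)" for x y z
  define T where "T x y = ev M (\<lambda>\<omega>. A \<omega> = x \<and> C \<omega> = y)" for x y
  define m where "m x y = (\<integral>\<omega>. indicator (T x y) \<omega> * Y \<omega> \<partial>M) / measure M (T x y)" for x y
  define w where "w z = measure M (ev M (\<lambda>\<omega>. D \<omega> = z))" for z
  define cc where "cc y z = cprob M (\<lambda>\<omega>. C \<omega> = y) (\<lambda>\<omega>. D \<omega> = z)" for y z
  define ca where "ca x y = cprob M (\<lambda>\<omega>. A \<omega> = x) (\<lambda>\<omega>. C \<omega> = y)" for x y
  have Ssets[measurable]: "S x y z \<in> sets M" for x y z unfolding S_def by measurable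
  have Tsets[measurable]: "T x y \<in> sets M" for x y unfolding T_def by measurable
  have Ppos: "P x y z > 0" for x y z using pos by (simp add: P_def S_def)
  have Tpos: "measure M (T x y) > 0" for x y
  proof -
    have "P x y True \<le> measure M (T x y)" unfolding P_def
      by (rule finite_measure_mono) (auto simp: S_def T_def ev_def)
    then show ?thesis using Ppos[of x y True] by simp
  qed
  have wpos: "w z > 0" for z
  proof -
    have "P True True z \<le> w z" unfolding P_def w_def
      by (rule finite_measure_mono) (auto simp: S_def ev_def)
    then show ?thesis using Ppos[of True True z] by simp
  qed
  have dI: "(\<integral>\<omega>. indicator (ev M (\<lambda>\<omega>. R (A \<omega>) (C \<omega>) (D \<omega>))) \<omega> * Y \<omega> \<partial>M)
    = (\<Sum>x\<in>UNIV. \<Sum>y\<in>UNIV. \<Sum>z\<in>UNIV. (if R x y z then 1 else 0) * I x y z)" for R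
    unfolding I_def S_def by (rule decomp3) (auto intro: Yint)
  have dP: "measure M (ev M (\<lambda>\<omega>. R (A \<omega>) (C \<omega>) (D \<omega>)))
    = (\<Sum>x\<in>UNIV. \<Sum>y\<in>UNIV. \<Sum>z\<in>UNIV. (if R x y z then 1 else 0) * P x y z)" for R
  proof -
    have "(\<integral>\<omega>. indicator (ev M (\<lambda>\<omega>. R (A \<omega>) (C \<omega>) (D \<omega>))) \<omega> * (\<lambda>_. 1::real) \<omega> \<partial>M)
      = (\<Sum>x\<in>UNIV. \<Sum>y\<in>UNIV. \<Sum>z\<in>UNIV. (if R x y z then 1 else 0) *
         (\<integral>\<omega>. indicator (ev M (\<lambda>\<omega>. A \<omega> = x \<and> C \<omega> = y \<and> D \<omega> = z)) \<omega> * (\<lambda>_. 1::real) \<omega> \<partial>M))"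
      by (rule decomp3) auto
    moreover have "ev M Q \<inter> space M = ev M Q" for Q by (auto simp: ev_def)
    ultimately show ?thesis by (simp add: P_def S_def)
  qed
  have evsp: "ev M Q \<inter> (Y -` B \<inter> space M) = ev M (\<lambda>\<omega>. Q \<omega> \<and> Y \<omega> \<in> B)" for Q B
    by (auto simp: ev_def)
  have fac: "measure M (S x y z \<inter> (Y -` B \<inter> space M)) = w z * cc y z * ca x y *
      (measure M (T x y \<inter> (Y -` B \<inter> space M)) / measure M (T x y))" if "B \<in> sets borel" for x y z B
  proof -
    have "ev M (\<lambda>\<omega>. Y \<omega> \<in> B \<and> A \<omega> = x \<and> C \<omega> = y) = T x y \<inter> (Y -` B \<inter> space M)"
      by (auto simp: ev_def T_def)
    moreover have "S x y z \<inter> (Y -` B \<inter> space M) = ev M (\<lambda>\<omega>. A \<omega> = x \<and> C \<omega> = y \<and> D \<omega> = z \<and> Y \<omega> \<in> B)"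
      by (auto simp: ev_def S_def)
    ultimately show ?thesis using factor that
      by (simp add: w_def cc_def ca_def cprob_def T_def)
  qed
  have hP: "P x y z = w z * cc y z * ca x y" for x y z
  proof -
    have "S x y z \<inter> (Y -` UNIV \<inter> space M) = S x y z" "T x y \<inter> (Y -` UNIV \<inter> space M) = T x y"
      by (auto simp: S_def T_def ev_def)
    then show ?thesis using fac[of UNIV x y z] Tpos[of x y] by (simp add: P_def)
  qed
  have hI: "I x y z = P x y z * m x y" for x y z
  proof -
    have "I x y z = (P x y z / measure M (T x y)) * (\<integral>\<omega>. indicator (T x y) \<omega> * Y \<omega> \<partial>M)"
      unfolding I_def
    proof (rule dist_scale)
      show "finite_measure M" by unfold_locales
      show "0 \<le> P x y z / measure M (T x y)" using Ppos[of x y z] Tpos[of x y] by simp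
      show "\<forall>B\<in>sets borel. measure M (S x y z \<inter> (Y -` B \<inter> space M)) =
          P x y z / measure M (T x y) * measure M (T x y \<inter> (Y -` B \<inter> space M))"
        using fac hP by simp
    qed auto
    then show ?thesis by (simp add: m_def)
  qed
  have cnn: "cc y z \<ge> 0" "ca x y \<ge> 0" for x y z
    by (simp_all add: cc_def ca_def cprob_def)
  have ccsum: "cc False z = 1 - cc True z" for z
  proof -
    have "w z = measure M (ev M (\<lambda>\<omega>. C \<omega> \<and> D \<omega> = z)) + measure M (ev M (\<lambda>\<omega>. \<not> C \<omega> \<and> D \<omega> = z))"
      unfolding w_def by (rule meas_split) (auto intro: prob_space_axioms)
    then show ?thesis using wpos[of z] by (simp add: cc_def cprob_def w_def field_simps)
  qed
  have casum: "ca False y = 1 - ca True y" for y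
  proof -
    have "measure M (ev M (\<lambda>\<omega>. C \<omega> = y)) = measure M (ev M (\<lambda>\<omega>. A \<omega> \<and> C \<omega> = y)) + measure M (ev M (\<lambda>\<omega>. \<not> A \<omega> \<and> C \<omega> = y))"
      by (rule meas_split) (auto intro: prob_space_axioms)
    moreover have "measure M (ev M (\<lambda>\<omega>. C \<omega> = y)) > 0"
    proof -
      have "P True y True \<le> measure M (ev M (\<lambda>\<omega>. C \<omega> = y))" unfolding P_def
        by (rule finite_measure_mono) (auto simp: S_def ev_def)
      then show ?thesis using Ppos[of True y True] by simp
    qed
    ultimately show ?thesis by (simp add: ca_def cprob_def field_simps)
  qed
  have cpos: "cc y z > 0" "ca x y > 0" for x y z
  proof -
    have "0 < w z * cc y z * ca x y" using Ppos[of x y z] hP by simp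
    then show "cc y z > 0" "ca x y > 0" using wpos[of z] cnn(1)[of y z] cnn(2)[of x y]
      by (auto simp: zero_less_mult_iff)
  qed
  have wsum: "w True + w False = 1"
  proof -
    have "measure M (ev M (\<lambda>\<omega>. True)) = measure M (ev M (\<lambda>\<omega>. D \<omega> \<and> True)) + measure M (ev M (\<lambda>\<omega>. \<not> D \<omega> \<and> True))"
      by (rule meas_split) (auto intro: prob_space_axioms)
    moreover have "ev M (\<lambda>\<omega>. True) = space M" by (simp add: ev_def)
    ultimately show ?thesis by (simp add: w_def prob_space)
  qed
  have wF: "w False = 1 - w True" using wsum by simp
  have ccc: "cc y True = cc y False" if "cc True True = cc True False" for y
    using that ccsum by (cases y) auto
  have qdep: "cc True True \<noteq> cc True False"
  proof
    assume eq: "cc True True = cc True False"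
    have prodeq: "prob (C -` a \<inter> space M \<inter> (D -` b \<inter> space M))
        = prob (C -` a \<inter> space M) * prob (D -` b \<inter> space M)" for a b
    proof -
      have e1: "C -` a \<inter> space M \<inter> (D -` b \<inter> space M) = ev M (\<lambda>\<omega>. C \<omega> \<in> a \<and> D \<omega> \<in> b)"
        "C -` a \<inter> space M = ev M (\<lambda>\<omega>. C \<omega> \<in> a \<and> True)"
        "D -` b \<inter> space M = ev M (\<lambda>\<omega>. True \<and> D \<omega> \<in> b)"
        by (auto simp: ev_def)
      have l1: "prob (C -` a \<inter> space M \<inter> (D -` b \<inter> space M)) = (\<Sum>x\<in>UNIV. \<Sum>y\<in>UNIV. \<Sum>z\<in>UNIV. (if y \<in> a \<and> z \<in> b then 1 else 0) * P x y z)"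
        using dP[of "\<lambda>x c d. c \<in> a \<and> d \<in> b"] unfolding e1(1) by simp
      have l2: "prob (C -` a \<inter> space M) = (\<Sum>x\<in>UNIV. \<Sum>y\<in>UNIV. \<Sum>z\<in>UNIV. (if y \<in> a then 1 else 0) * P x y z)"
        using dP[of "\<lambda>x c d. c \<in> a \<and> True"] unfolding e1(2) by simp
      have l3: "prob (D -` b \<inter> space M) = (\<Sum>x\<in>UNIV. \<Sum>y\<in>UNIV. \<Sum>z\<in>UNIV. (if z \<in> b then 1 else 0) * P x y z)"
        using dP[of "\<lambda>x c d. True \<and> d \<in> b"] unfolding e1(3) by simp
      show ?thesis
        unfolding l1 l2 l3
        using ccc[OF eq] wF
        by (simp add: UNIV_bool hP ccsum casum wF algebra_simps split: if_split)
    qed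
    have "indep_var (count_space UNIV) C (count_space UNIV) D"
      unfolding indep_var_def indep_vars_def2
    proof
      show "\<forall>i\<in>UNIV. random_variable (case_bool (count_space UNIV) (count_space UNIV) i) (case_bool C D i)"
        by (auto split: bool.split)
      have "indep_set {C -` a \<inter> space M | a. a \<in> sets (count_space UNIV)} {D -` a \<inter> space M | a. a \<in> sets (count_space UNIV)}"
        unfolding indep_sets2_eq using prodeq by auto
      then show "indep_sets (\<lambda>i. {case_bool C D i -` A \<inter> space M |A. A \<in> sets (case_bool (count_space UNIV) (count_space UNIV) i)}) UNIV"
        unfolding indep_set_def by (rule indep_sets_cong[THEN iffD1, rotated 2]) (auto split: bool.split)
    qed
    then show False using dep by simp
  qed
  have mC: "cexp M Y (\<lambda>\<omega>. A \<omega> = x \<and> C \<omega> = y) = m x y" for x y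
    by (simp add: cexp_def m_def T_def)
  have mC': "cexp M Y (\<lambda>\<omega>. A \<omega> \<and> C \<omega>) = m True True"
    "cexp M Y (\<lambda>\<omega>. A \<omega> \<and> \<not> C \<omega>) = m True False"
    "cexp M Y (\<lambda>\<omega>. \<not> A \<omega> \<and> C \<omega>) = m False True"
    "cexp M Y (\<lambda>\<omega>. \<not> A \<omega> \<and> \<not> C \<omega>) = m False False"
    using mC[of True True] mC[of True False] mC[of False True] mC[of False False] by simp_all
  have pC: "measure M (ev M C) = w True * cc True True + w False * cc True False"
    using dP[of "\<lambda>a c d. c"] by (simp add: UNIV_bool hP casum algebra_simps)
  have pnC: "measure M (ev M (\<lambda>\<omega>. \<not> C \<omega>)) = w True * (1 - cc True True) + w False * (1 - cc True False)"
    using dP[of "\<lambda>a c d. \<not> c"] by (simp add: UNIV_bool hP casum ccsum algebra_simps)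
  have RDC: "RD M A C Y = m True True * (w True * cc True True + w False * cc True False)
      + m True False * (w True * (1 - cc True True) + w False * (1 - cc True False))
      - m False True * (w True * cc True True + w False * cc True False)
      - m False False * (w True * (1 - cc True True) + w False * (1 - cc True False))"
    unfolding RD_def mC' pC pnC by (simp add: algebra_simps)
  have wD: "measure M (ev M D) = w True" "measure M (ev M (\<lambda>\<omega>. \<not> D \<omega>)) = w False"
    by (simp_all add: w_def)
  have RDD: "RD M A D Y = cexp M Y (\<lambda>\<omega>. A \<omega> \<and> D \<omega>) * w True + cexp M Y (\<lambda>\<omega>. A \<omega> \<and> \<not> D \<omega>) * w False
     - cexp M Y (\<lambda>\<omega>. \<not> A \<omega> \<and> D \<omega>) * w True - cexp M Y (\<lambda>\<omega>. \<not> A \<omega> \<and> \<not> D \<omega>) * w False"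
    unfolding RD_def wD ..
  have E11: "cexp M Y (\<lambda>\<omega>. A \<omega> \<and> D \<omega>) = (w True * cc True True * ca True True * m True True + w True * (1 - cc True True) * ca True False * m True False)
     / (w True * cc True True * ca True True + w True * (1 - cc True True) * ca True False)"
    unfolding cexp_def using dI[of "\<lambda>a c d. a \<and> d"] dP[of "\<lambda>a c d. a \<and> d"]
    by (simp add: UNIV_bool hI hP ccsum casum ac_simps)
  have E10: "cexp M Y (\<lambda>\<omega>. A \<omega> \<and> \<not> D \<omega>) = (w False * cc True False * ca True True * m True True + w False * (1 - cc True False) * ca True False * m True False)
     / (w False * cc True False * ca True True + w False * (1 - cc True False) * ca True False)"
    unfolding cexp_def using dI[of "\<lambda>a c d. a \<and> \<not> d"] dP[of "\<lambda>a c d. a \<and> \<not> d"]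
    by (simp add: UNIV_bool hI hP ccsum casum ac_simps)
  have E01: "cexp M Y (\<lambda>\<omega>. \<not> A \<omega> \<and> D \<omega>) = (w True * cc True True * (1 - ca True True) * m False True + w True * (1 - cc True True) * (1 - ca True False) * m False False)
     / (w True * cc True True * (1 - ca True True) + w True * (1 - cc True True) * (1 - ca True False))"
    unfolding cexp_def using dI[of "\<lambda>a c d. \<not> a \<and> d"] dP[of "\<lambda>a c d. \<not> a \<and> d"]
    by (simp add: UNIV_bool hI hP ccsum casum ac_simps)
  have E00: "cexp M Y (\<lambda>\<omega>. \<not> A \<omega> \<and> \<not> D \<omega>) = (w False * cc True False * (1 - ca True True) * m False True + w False * (1 - cc True False) * (1 - ca True False) * m False False)
     / (w False * cc True False * (1 - ca True True) + w False * (1 - cc True False) * (1 - ca True False))"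
    unfolding cexp_def using dI[of "\<lambda>a c d. \<not> a \<and> \<not> d"] dP[of "\<lambda>a c d. \<not> a \<and> \<not> d"]
    by (simp add: UNIV_bool hI hP ccsum casum ac_simps)
  have pa1: "cprob M A D = (w True * cc True True * ca True True + w True * (1 - cc True True) * ca True False) / w True"
    unfolding cprob_def wD using dP[of "\<lambda>a c d. a \<and> d"]
    by (simp add: UNIV_bool hP ccsum casum ac_simps)
  have pa0: "cprob M A (\<lambda>\<omega>. \<not> D \<omega>) = (w False * cc True False * ca True True + w False * (1 - cc True False) * ca True False) / w False"
    unfolding cprob_def wD using dP[of "\<lambda>a c d. a \<and> \<not> d"]
    by (simp add: UNIV_bool hP ccsum casum ac_simps)
  have q1: "cc True z < 1" for z using cpos(1)[of False z] ccsum[of z] by simp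
  have r1: "ca True y < 1" for y using cpos(2)[of False y] casum[of y] by simp
  have key: "((cexp M Y (\<lambda>\<omega>. A \<omega> \<and> D \<omega>) \<ge> cexp M Y (\<lambda>\<omega>. A \<omega> \<and> \<not> D \<omega>) \<and>
        cexp M Y (\<lambda>\<omega>. \<not> A \<omega> \<and> D \<omega>) \<ge> cexp M Y (\<lambda>\<omega>. \<not> A \<omega> \<and> \<not> D \<omega>) \<and>
        cprob M A D \<ge> cprob M A (\<lambda>\<omega>. \<not> D \<omega>)) \<or>
       (cexp M Y (\<lambda>\<omega>. A \<omega> \<and> D \<omega>) \<le> cexp M Y (\<lambda>\<omega>. A \<omega> \<and> \<not> D \<omega>) \<and>
        cexp M Y (\<lambda>\<omega>. \<not> A \<omega> \<and> D \<omega>) \<le> cexp M Y (\<lambda>\<omega>. \<not> A \<omega> \<and> \<not> D \<omega>) \<and>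
        cprob M A D \<le> cprob M A (\<lambda>\<omega>. \<not> D \<omega>))
        \<longrightarrow> RD M A D Y \<ge> RD M A C Y)
     \<and> ((cexp M Y (\<lambda>\<omega>. A \<omega> \<and> D \<omega>) \<ge> cexp M Y (\<lambda>\<omega>. A \<omega> \<and> \<not> D \<omega>) \<and>
        cexp M Y (\<lambda>\<omega>. \<not> A \<omega> \<and> D \<omega>) \<ge> cexp M Y (\<lambda>\<omega>. \<not> A \<omega> \<and> \<not> D \<omega>) \<and>
        cprob M A D \<le> cprob M A (\<lambda>\<omega>. \<not> D \<omega>)) \<or>
       (cexp M Y (\<lambda>\<omega>. A \<omega> \<and> D \<omega>) \<le> cexp M Y (\<lambda>\<omega>. A \<omega> \<and> \<not> D \<omega>) \<and>
        cexp M Y (\<lambda>\<omega>. \<not> A \<omega> \<and> D \<omega>) \<le> cexp M Y (\<lambda>\<omega>. \<not> A \<omega> \<and> \<not> D \<omega>) \<and>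
        cprob M A D \<ge> cprob M A (\<lambda>\<omega>. \<not> D \<omega>))
        \<longrightarrow> RD M A D Y \<le> RD M A C Y)"
    by (rule alg_w[OF wpos[of True] wpos[of False] cpos(1)[of True True] q1[of True]
        cpos(1)[of True False] q1[of False] cpos(2)[of True True] r1[of True]
        cpos(2)[of True False] r1[of False] qdep E11 E10 E01 E00 pa1 pa0 RDD RDC])
  show ?thesis using key
    unfolding EY_nondec_def EY_noninc_def EA_nondec_def EA_noninc_def
    by (simp add: all_bool_eq)
qed

end
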